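(* Let $(A,[-,-,-],\varepsilon)$ be a ternary Leibniz color algebra. Then $A\otimes A$, graded by $(A\otimes A)_c=\bigoplus_{a+b=c}A_a\otimes A_b$, is a Leibniz color algebra with the bracket defined on homogeneous tensors by $$[x\otimes y,\,x'\otimes y']:=x\otimes[y,x',y']+\varepsilon(y,x'+y')\,[x,x',y']\otimes y$$ and extended bilinearly.
   Context: $G$ is an abelian group, $\mathbb{K}$ a field of characteristic $\neq 2$, $\mathcal{H}(V)$ the homogeneous elements of a $G$-graded space $V$; even maps preserve degree. A skew-symmetric bicharacter $\varepsilon:G\times G\to\mathbb{K}^*$ satisfies $\varepsilon(a,b)\varepsilon(b,a)=1$, $\varepsilon(a,b+c)=\varepsilon(a,b)\varepsilon(a,c)$, $\varepsilon(a+b,c)=\varepsilon(a,c)\varepsilon(b,c)$; $\varepsilon(x,y)$ means $\varepsilon$ of the degrees. A Leibniz color algebra is a $G$-graded space with an even bilinear $[-,-]$ such that $[[x,y],z]=[x,[y,z]]+\varepsilon(y,z)[[x,z],y]$ for homogeneous $x,y,z$. A ternary Leibniz color algebra is a $G$-graded space with such $\varepsilon$ and an even trilinear $[-,-,-]$ satisfying $[[x,y,z],t,u]=[x,y,[z,t,u]]+\varepsilon(z,t+u)[x,[y,t,u],z]+\varepsilon(y+z,t+u)[[x,t,u],y,z]$ for all homogeneous $x,y,z,t,u$. *)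

theory Defs
  imports Complex_Main "HOL-Library.Function_Algebras"
begin

definition graded_space :: "('k::field \<Rightarrow> 'v::ab_group_add \<Rightarrow> 'v) \<Rightarrow> ('g \<Rightarrow> 'v set) \<Rightarrow> bool" where
  "graded_space s V \<longleftrightarrow> vector_space s
     \<and> (\<forall>g. module.subspace s (V g))
     \<and> (\<forall>x. \<exists>!f. finite {g. f g \<noteq> 0} \<and> (\<forall>g. f g \<in> V g) \<and> x = (\<Sum>g\<in>{g. f g \<noteq> 0}. f g))"

definition skew_bicharacter :: "('g::ab_group_add \<Rightarrow> 'g \<Rightarrow> 'k::field) \<Rightarrow> bool" where
  "skew_bicharacter \<epsilon> \<longleftrightarrow> (\<forall>a b. \<epsilon> a b \<noteq> 0)
     \<and> (\<forall>a b. \<epsilon> a b * \<epsilon> b a = 1)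
     \<and> (\<forall>a b c. \<epsilon> a (b + c) = \<epsilon> a b * \<epsilon> a c)
     \<and> (\<forall>a b c. \<epsilon> (a + b) c = \<epsilon> a c * \<epsilon> b c)"

definition bilinear_map :: "('k::field \<Rightarrow> 'v::ab_group_add \<Rightarrow> 'v) \<Rightarrow> ('k \<Rightarrow> 'w::ab_group_add \<Rightarrow> 'w)
     \<Rightarrow> ('v \<Rightarrow> 'v \<Rightarrow> 'w) \<Rightarrow> bool" where
  "bilinear_map s t f \<longleftrightarrow> (\<forall>x. Vector_Spaces.linear s t (f x)) \<and> (\<forall>y. Vector_Spaces.linear s t (\<lambda>x. f x y))"

definition trilinear_map :: "('k::field \<Rightarrow> 'v::ab_group_add \<Rightarrow> 'v) \<Rightarrow> ('v \<Rightarrow> 'v \<Rightarrow> 'v \<Rightarrow> 'v) \<Rightarrow> bool" where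
  "trilinear_map s f \<longleftrightarrow> (\<forall>y z. Vector_Spaces.linear s s (\<lambda>x. f x y z))
     \<and> (\<forall>x z. Vector_Spaces.linear s s (\<lambda>y. f x y z)) \<and> (\<forall>x y. Vector_Spaces.linear s s (f x y))"

definition leibniz_color_algebra :: "('k::field \<Rightarrow> 'v::ab_group_add \<Rightarrow> 'v) \<Rightarrow> ('g::ab_group_add \<Rightarrow> 'v set)
     \<Rightarrow> ('g \<Rightarrow> 'g \<Rightarrow> 'k) \<Rightarrow> ('v \<Rightarrow> 'v \<Rightarrow> 'v) \<Rightarrow> bool" where
  "leibniz_color_algebra s V \<epsilon> br \<longleftrightarrow> graded_space s V \<and> skew_bicharacter \<epsilon>
     \<and> bilinear_map s s br
     \<and> (\<forall>a b x y. x \<in> V a \<longrightarrow> y \<in> V b \<longrightarrow> br x y \<in> V (a + b))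
     \<and> (\<forall>a b c x y z. x \<in> V a \<longrightarrow> y \<in> V b \<longrightarrow> z \<in> V c \<longrightarrow>
          br (br x y) z = br x (br y z) + s (\<epsilon> b c) (br (br x z) y))"

definition ternary_leibniz_color_algebra :: "('k::field \<Rightarrow> 'v::ab_group_add \<Rightarrow> 'v) \<Rightarrow> ('g::ab_group_add \<Rightarrow> 'v set)
     \<Rightarrow> ('g \<Rightarrow> 'g \<Rightarrow> 'k) \<Rightarrow> ('v \<Rightarrow> 'v \<Rightarrow> 'v \<Rightarrow> 'v) \<Rightarrow> bool" where
  "ternary_leibniz_color_algebra s V \<epsilon> tb \<longleftrightarrow> graded_space s V \<and> skew_bicharacter \<epsilon>
     \<and> trilinear_map s tb
     \<and> (\<forall>a b c x y z. x \<in> V a \<longrightarrow> y \<in> V b \<longrightarrow> z \<in> V c \<longrightarrow> tb x y z \<in> V (a + b + c))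
     \<and> (\<forall>a b c d e x y z t u. x \<in> V a \<longrightarrow> y \<in> V b \<longrightarrow> z \<in> V c \<longrightarrow> t \<in> V d \<longrightarrow> u \<in> V e \<longrightarrow>
          tb (tb x y z) t u = tb x y (tb z t u) + s (\<epsilon> c (d + e)) (tb x (tb y t u) z)
                              + s (\<epsilon> (b + c) (d + e)) (tb (tb x t u) y z))"

text \<open>Tensor product of a vector space with itself, via the standard construction:
  the free vector space on pairs modulo the bilinearity relations. (T, tensor) is a
  tensor product of A with itself iff the induced linear map from the free vector space
  onto T is surjective with kernel exactly the span of the bilinearity relations.\<close>
definition free_delta :: "'a \<Rightarrow> 'a \<Rightarrow> ('a \<times> 'a \<Rightarrow> 'k::field)" where
  "free_delta x y = (\<lambda>q. if q = (x, y) then 1 else 0)"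

definition free_scale :: "'k::field \<Rightarrow> ('a \<times> 'a \<Rightarrow> 'k) \<Rightarrow> ('a \<times> 'a \<Rightarrow> 'k)" where
  "free_scale c f = (\<lambda>q. c * f q)"

definition bilin_relations :: "('k::field \<Rightarrow> 'a::ab_group_add \<Rightarrow> 'a) \<Rightarrow> ('a \<times> 'a \<Rightarrow> 'k) set" where
  "bilin_relations s =
     {free_delta (x + x') y - free_delta x y - free_delta x' y | x x' y. True}
   \<union> {free_delta x (y + y') - free_delta x y - free_delta x y' | x y y'. True}
   \<union> {free_delta (s c x) y - free_scale c (free_delta x y) | c x y. True}
   \<union> {free_delta x (s c y) - free_scale c (free_delta x y) | c x y. True}"

definition induced_map :: "('k::field \<Rightarrow> 't::ab_group_add \<Rightarrow> 't) \<Rightarrow> ('a \<Rightarrow> 'a \<Rightarrow> 't)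
     \<Rightarrow> ('a \<times> 'a \<Rightarrow> 'k) \<Rightarrow> 't" where
  "induced_map sT tensor f = (\<Sum>q\<in>{q. f q \<noteq> 0}. sT (f q) (tensor (fst q) (snd q)))"

definition is_tensor_square :: "('k::field \<Rightarrow> 'a::ab_group_add \<Rightarrow> 'a) \<Rightarrow> ('k \<Rightarrow> 't::ab_group_add \<Rightarrow> 't)
     \<Rightarrow> ('a \<Rightarrow> 'a \<Rightarrow> 't) \<Rightarrow> bool" where
  "is_tensor_square sA sT tensor \<longleftrightarrow>
     vector_space sA \<and> vector_space sT
     \<and> (\<forall>t. \<exists>f. finite {q. f q \<noteq> 0} \<and> t = induced_map sT tensor f)
     \<and> (\<forall>f. finite {q. f q \<noteq> 0} \<longrightarrow>
          (induced_map sT tensor f = 0 \<longleftrightarrow> f \<in> module.span free_scale (bilin_relations sA)))"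

definition tensor_grading :: "('k::field \<Rightarrow> 't::ab_group_add \<Rightarrow> 't) \<Rightarrow> ('a \<Rightarrow> 'a \<Rightarrow> 't)
     \<Rightarrow> ('g::ab_group_add \<Rightarrow> 'a set) \<Rightarrow> 'g \<Rightarrow> 't set" where
  "tensor_grading sT tensor V c =
     module.span sT {tensor x y | x y a b. x \<in> V a \<and> y \<in> V b \<and> a + b = c}"

end

theory Submission
  imports Defs
begin

definition supp :: "('q \<Rightarrow> 'k::zero) \<Rightarrow> 'q set" where "supp f = {q. f q \<noteq> 0}"

definition bil :: "('k::field \<Rightarrow> 'a::ab_group_add \<Rightarrow> 'a) \<Rightarrow> ('k \<Rightarrow> 't::ab_group_add \<Rightarrow> 't) \<Rightarrow> ('a \<Rightarrow> 'a \<Rightarrow> 't) \<Rightarrow> bool" where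
  "bil sA sT \<phi> \<longleftrightarrow> (\<forall>x x' y. \<phi> (x + x') y = \<phi> x y + \<phi> x' y) \<and> (\<forall>x y y'. \<phi> x (y + y') = \<phi> x y + \<phi> x y')
     \<and> (\<forall>c x y. \<phi> (sA c x) y = sT c (\<phi> x y)) \<and> (\<forall>c x y. \<phi> x (sA c y) = sT c (\<phi> x y))"

lemma free_scale_module: "module (free_scale :: 'k::field \<Rightarrow> ('q \<times> 'q \<Rightarrow> 'k) \<Rightarrow> _)"
  by unfold_locales (auto simp: free_scale_def fun_eq_iff algebra_simps)

context vector_space begin

lemma im_super:
  assumes S: "finite S" "{q. f q \<noteq> 0} \<subseteq> S"
  shows "induced_map scale \<phi> f = (\<Sum>q\<in>S. scale (f q) (\<phi> (fst q) (snd q)))"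
  unfolding induced_map_def
  by (rule sum.mono_neutral_left) (use S in auto)

lemma im_add:
  assumes "finite {q. f q \<noteq> 0}" "finite {q. g q \<noteq> 0}"
  shows "induced_map scale \<phi> (f + g) = induced_map scale \<phi> f + induced_map scale \<phi> g"
proof -
  let ?S = "{q. f q \<noteq> 0} \<union> {q. g q \<noteq> 0}"
  have fin: "finite ?S" using assms by auto
  have "induced_map scale \<phi> (f + g) = (\<Sum>q\<in>?S. scale ((f+g) q) (\<phi> (fst q) (snd q)))"
    by (rule im_super) (use fin in auto)
  also have "\<dots> = (\<Sum>q\<in>?S. scale (f q) (\<phi> (fst q) (snd q))) + (\<Sum>q\<in>?S. scale (g q) (\<phi> (fst q) (snd q)))"
    by (simp add: scale_left_distrib sum.distrib)
  also have "\<dots> = induced_map scale \<phi> f + induced_map scale \<phi> g"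
    by (subst (1 2) im_super[of ?S]) (use fin in auto)
  finally show ?thesis .
qed

lemma im_diff:
  assumes "finite {q. f q \<noteq> 0}" "finite {q. g q \<noteq> 0}"
  shows "induced_map scale \<phi> (f - g) = induced_map scale \<phi> f - induced_map scale \<phi> g"
proof -
  let ?S = "{q. f q \<noteq> 0} \<union> {q. g q \<noteq> 0}"
  have fin: "finite ?S" using assms by auto
  have "induced_map scale \<phi> (f - g) = (\<Sum>q\<in>?S. scale ((f-g) q) (\<phi> (fst q) (snd q)))"
    by (rule im_super) (use fin in auto)
  also have "\<dots> = (\<Sum>q\<in>?S. scale (f q) (\<phi> (fst q) (snd q))) - (\<Sum>q\<in>?S. scale (g q) (\<phi> (fst q) (snd q)))"
    by (simp add: scale_left_diff_distrib sum_subtractf)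
  also have "\<dots> = induced_map scale \<phi> f - induced_map scale \<phi> g"
    by (subst (1 2) im_super[of ?S]) (use fin in auto)
  finally show ?thesis .
qed

lemma im_scale:
  assumes "finite {q. f q \<noteq> 0}"
  shows "induced_map scale \<phi> (free_scale c f) = scale c (induced_map scale \<phi> f)"
proof -
  have "induced_map scale \<phi> (free_scale c f) = (\<Sum>q\<in>{q. f q \<noteq> 0}. scale (free_scale c f q) (\<phi> (fst q) (snd q)))"
    by (rule im_super) (use assms in \<open>auto simp: free_scale_def\<close>)
  also have "\<dots> = scale c (induced_map scale \<phi> f)"
    by (simp add: induced_map_def free_scale_def scale_sum_right)
  finally show ?thesis .
qed

lemma im_zero: "induced_map scale \<phi> 0 = 0"
  by (simp add: induced_map_def)

lemma im_delta: "induced_map scale \<phi> (free_delta x y) = \<phi> x y"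
proof -
  have "{q. free_delta x y q \<noteq> (0::'a)} = {(x,y)}" by (auto simp: free_delta_def)
  then show ?thesis by (simp add: induced_map_def free_delta_def)
qed

lemma im_phi_add: "induced_map scale (\<lambda>x y. \<phi>1 x y + \<phi>2 x y) f = induced_map scale \<phi>1 f + induced_map scale \<phi>2 f"
  by (simp add: induced_map_def scale_right_distrib sum.distrib)

lemma im_phi_scale: "induced_map scale (\<lambda>x y. scale c (\<phi> x y)) f = scale c (induced_map scale \<phi> f)"
  by (simp add: induced_map_def scale_sum_right mult.commute)

end

lemma fin_delta: "finite {q. free_delta x y q \<noteq> (0::'k::field)}"
proof -
  have "{q. free_delta x y q \<noteq> (0::'k)} \<subseteq> {(x,y)}" by (auto simp: free_delta_def)
  then show ?thesis using finite_subset by blast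
qed

lemma fin_diff: "finite {q. f q \<noteq> (0::'k::ab_group_add)} \<Longrightarrow> finite {q. g q \<noteq> 0} \<Longrightarrow> finite {q. (f - g) q \<noteq> 0}"
  by (rule finite_subset[of _ "{q. f q \<noteq> 0} \<union> {q. g q \<noteq> 0}"]) auto

lemma fin_add: "finite {q. f q \<noteq> (0::'k::ab_group_add)} \<Longrightarrow> finite {q. g q \<noteq> 0} \<Longrightarrow> finite {q. (f + g) q \<noteq> 0}"
  by (rule finite_subset[of _ "{q. f q \<noteq> 0} \<union> {q. g q \<noteq> 0}"]) auto

lemma fin_scale: "finite {q. f q \<noteq> (0::'k::field)} \<Longrightarrow> finite {q. free_scale c f q \<noteq> 0}"
  by (rule finite_subset[of _ "{q. f q \<noteq> 0}"]) (auto simp: free_scale_def)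

lemma rel_fin: "r \<in> bilin_relations sA \<Longrightarrow> finite {q. r q \<noteq> (0::'k::field)}"
  unfolding bilin_relations_def
  by (auto intro!: fin_diff fin_delta fin_scale)

lemma span_fin:
  assumes "r \<in> module.span free_scale (bilin_relations sA)"
  shows "finite {q. r q \<noteq> (0::'k::field)}"
  by (rule module.span_induct_alt[OF free_scale_module assms, where h="\<lambda>r. finite {q. r q \<noteq> (0::'k)}"])
     (simp, metis fin_add fin_scale rel_fin)

lemma span_vanish:
  assumes vsA: "vector_space sA" and vsT: "vector_space sT" and B: "bil sA sT \<phi>"
    and r: "r \<in> module.span free_scale (bilin_relations sA)"
  shows "induced_map sT \<phi> r = 0"
proof -
  interpret T: vector_space sT by (rule vsT)
  have d2: "induced_map sT \<phi> (free_delta a b - free_delta c d - free_delta e f) = \<phi> a b - \<phi> c d - \<phi> e f" for a b c d e f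
  proof -
    have f1: "finite {q. (free_delta a b - free_delta c d) q \<noteq> (0::'a)}" by (rule fin_diff[OF fin_delta fin_delta])
    show ?thesis by (simp only: T.im_diff[OF f1 fin_delta] T.im_diff[OF fin_delta fin_delta] T.im_delta)
  qed
  have d1: "induced_map sT \<phi> (free_delta a b - free_scale k (free_delta c d)) = \<phi> a b - sT k (\<phi> c d)" for a b c d k
    by (simp only: T.im_diff[OF fin_delta fin_scale[OF fin_delta]] T.im_delta T.im_scale[OF fin_delta])
  have rel: "induced_map sT \<phi> r = 0" if "r \<in> bilin_relations sA" for r
    using that B unfolding bilin_relations_def bil_def
    by (auto simp: d1 d2)
  have "finite {q. r q \<noteq> 0} \<and> induced_map sT \<phi> r = 0"
  proof (rule module.span_induct_alt[OF free_scale_module r, where h="\<lambda>r. finite {q. r q \<noteq> 0} \<and> induced_map sT \<phi> r = 0"])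
    fix c x y assume x: "x \<in> bilin_relations sA" and y: "finite {q. y q \<noteq> 0} \<and> induced_map sT \<phi> y = 0"
    have fx: "finite {q. free_scale c x q \<noteq> 0}" by (rule fin_scale[OF rel_fin[OF x]])
    show "finite {q. (free_scale c x + y) q \<noteq> 0} \<and> induced_map sT \<phi> (free_scale c x + y) = 0"
      using fin_add[OF fx] y T.im_add[OF fx] T.im_scale[OF rel_fin[OF x]] rel[OF x] by simp
  qed (simp add: T.im_zero)
  then show ?thesis by simp
qed


lemma bil_add: "bil sA sT \<phi>1 \<Longrightarrow> bil sA sT \<phi>2 \<Longrightarrow> vector_space sT \<Longrightarrow> bil sA sT (\<lambda>x y. \<phi>1 x y + \<phi>2 x y)"
  unfolding bil_def by (simp add: vector_space.vector_space_assms(1) algebra_simps)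

lemma bil_sum: "(\<And>i. i \<in> I \<Longrightarrow> bil sA sT (\<phi> i)) \<Longrightarrow> vector_space sT \<Longrightarrow> bil sA sT (\<lambda>x y. \<Sum>i\<in>I. \<phi> i x y)"
proof -
  assume a: "\<And>i. i \<in> I \<Longrightarrow> bil sA sT (\<phi> i)" and v: "vector_space sT"
  interpret vector_space sT by (rule v)
  show ?thesis using a unfolding bil_def by (simp add: sum.distrib scale_sum_right)
qed

lemma bil_zero: "vector_space sT \<Longrightarrow> bil sA sT (\<lambda>x y. 0)"
proof -
  assume v: "vector_space sT"
  interpret vector_space sT by (rule v)
  show ?thesis unfolding bil_def by simp
qed

locale tsq =
  fixes sA :: "'k::field \<Rightarrow> 'a::ab_group_add \<Rightarrow> 'a" and sT :: "'k \<Rightarrow> 't::ab_group_add \<Rightarrow> 't"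
    and tensor :: "'a \<Rightarrow> 'a \<Rightarrow> 't"
  assumes T: "is_tensor_square sA sT tensor"
begin

sublocale A: vector_space sA using T by (simp add: is_tensor_square_def)
sublocale T: vector_space sT using T by (simp add: is_tensor_square_def)

lemma rel_zero: "r \<in> bilin_relations sA \<Longrightarrow> induced_map sT tensor r = 0"
  using T rel_fin[of r sA] unfolding is_tensor_square_def
  by (meson module.span_base free_scale_module)

lemma tensor_bil: "bil sA sT tensor"
proof -
  have d2: "induced_map sT tensor (free_delta a b - free_delta c d - free_delta e f) = tensor a b - tensor c d - tensor e f" for a b c d e f
  proof -
    have f1: "finite {q. (free_delta a b - free_delta c d) q \<noteq> (0::'k)}" by (rule fin_diff[OF fin_delta fin_delta])
    show ?thesis by (simp only: T.im_diff[OF f1 fin_delta] T.im_diff[OF fin_delta fin_delta] T.im_delta)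
  qed
  have d1: "induced_map sT tensor (free_delta a b - free_scale k (free_delta c d)) = tensor a b - sT k (tensor c d)" for a b c d k
    by (simp only: T.im_diff[OF fin_delta fin_scale[OF fin_delta]] T.im_delta T.im_scale[OF fin_delta])
  show ?thesis unfolding bil_def
  proof (intro conjI allI)
    fix x x' y show "tensor (x + x') y = tensor x y + tensor x' y"
    proof -
      have "free_delta (x + x') y - free_delta x y - free_delta x' y \<in> bilin_relations sA" unfolding bilin_relations_def by blast
      from rel_zero[OF this] show ?thesis unfolding d2 by (simp add: algebra_simps)
    qed
  next
    fix x y y' show "tensor x (y + y') = tensor x y + tensor x y'"
    proof -
      have "free_delta x (y + y') - free_delta x y - free_delta x y' \<in> bilin_relations sA" unfolding bilin_relations_def by blast
      from rel_zero[OF this] show ?thesis unfolding d2 by (simp add: algebra_simps)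
    qed
  next
    fix c x y show "tensor (sA c x) y = sT c (tensor x y)"
    proof -
      have "free_delta (sA c x) y - free_scale c (free_delta x y) \<in> bilin_relations sA" unfolding bilin_relations_def by blast
      from rel_zero[OF this] show ?thesis unfolding d1 by (simp add: algebra_simps)
    qed
  next
    fix c x y show "tensor x (sA c y) = sT c (tensor x y)"
    proof -
      have "free_delta x (sA c y) - free_scale c (free_delta x y) \<in> bilin_relations sA" unfolding bilin_relations_def by blast
      from rel_zero[OF this] show ?thesis unfolding d1 by (simp add: algebra_simps)
    qed
  qed
qed

lemma tensor_add1: "tensor (x + x') y = tensor x y + tensor x' y"
  and tensor_add2: "tensor x (y + y') = tensor x y + tensor x y'"
  and tensor_scale1: "tensor (sA c x) y = sT c (tensor x y)"
  and tensor_scale2: "tensor x (sA c y) = sT c (tensor x y)"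
  using tensor_bil unfolding bil_def by auto

definition rep :: "'t \<Rightarrow> ('a \<times> 'a \<Rightarrow> 'k)" where
  "rep t = (SOME f. finite {q. f q \<noteq> 0} \<and> t = induced_map sT tensor f)"

definition lift :: "('a \<Rightarrow> 'a \<Rightarrow> 't) \<Rightarrow> 't \<Rightarrow> 't" where
  "lift \<phi> t = induced_map sT \<phi> (rep t)"

lemma rep: "finite {q. rep t q \<noteq> 0}" "t = induced_map sT tensor (rep t)"
proof -
  have "\<exists>f. finite {q. f q \<noteq> 0} \<and> t = induced_map sT tensor f" using T by (simp add: is_tensor_square_def)
  then have "finite {q. rep t q \<noteq> 0} \<and> t = induced_map sT tensor (rep t)"
    unfolding rep_def by (rule someI_ex)
  then show "finite {q. rep t q \<noteq> 0}" "t = induced_map sT tensor (rep t)" by auto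
qed

lemma lift_im:
  assumes B: "bil sA sT \<phi>" and f: "finite {q. f q \<noteq> 0}"
  shows "lift \<phi> (induced_map sT tensor f) = induced_map sT \<phi> f"
proof -
  let ?g = "rep (induced_map sT tensor f)"
  have g: "finite {q. ?g q \<noteq> 0}" "induced_map sT tensor ?g = induced_map sT tensor f" using rep[of "induced_map sT tensor f"] by auto
  have "induced_map sT tensor (?g - f) = 0" using g f by (simp add: T.im_diff)
  then have "?g - f \<in> module.span free_scale (bilin_relations sA)"
    using T fin_diff[OF g(1) f] by (simp add: is_tensor_square_def)
  then have "induced_map sT \<phi> (?g - f) = 0"
    by (rule span_vanish[OF A.vector_space_axioms T.vector_space_axioms B])
  then show ?thesis using g f by (simp add: T.im_diff lift_def)
qed

lemma lift_tensor: "bil sA sT \<phi> \<Longrightarrow> lift \<phi> (tensor x y) = \<phi> x y"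
  using lift_im[of \<phi> "free_delta x y"] by (simp add: fin_delta T.im_delta)

lemma lift_add: "bil sA sT \<phi> \<Longrightarrow> lift \<phi> (t + t') = lift \<phi> t + lift \<phi> t'"
proof -
  assume B: "bil sA sT \<phi>"
  have "t + t' = induced_map sT tensor (rep t + rep t')"
    using rep[of t] rep[of t'] by (simp add: T.im_add)
  then have "lift \<phi> (t + t') = induced_map sT \<phi> (rep t + rep t')"
    using lift_im[OF B fin_add[OF rep(1) rep(1)]] by metis
  then show ?thesis using rep by (simp add: T.im_add lift_def)
qed

lemma lift_scale: "bil sA sT \<phi> \<Longrightarrow> lift \<phi> (sT c t) = sT c (lift \<phi> t)"
proof -
  assume B: "bil sA sT \<phi>"
  have "sT c t = induced_map sT tensor (free_scale c (rep t))"
    using rep[of t] by (simp add: T.im_scale)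
  then have "lift \<phi> (sT c t) = induced_map sT \<phi> (free_scale c (rep t))"
    using lift_im[OF B fin_scale[OF rep(1)]] by metis
  then show ?thesis using rep by (simp add: T.im_scale lift_def)
qed

lemma lift_phi_add: "lift (\<lambda>x y. \<phi>1 x y + \<phi>2 x y) t = lift \<phi>1 t + lift \<phi>2 t"
  by (simp add: lift_def T.im_phi_add)

lemma lift_phi_scale: "lift (\<lambda>x y. sT c (\<phi> x y)) t = sT c (lift \<phi> t)"
  by (simp add: lift_def T.im_phi_scale)

lemma lift_phi_sum: "finite I \<Longrightarrow> lift (\<lambda>x y. \<Sum>i\<in>I. \<phi> i x y) t = (\<Sum>i\<in>I. lift (\<phi> i) t)"
proof (induction I rule: finite_induct)
  case empty then show ?case by (simp add: lift_def induced_map_def)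
next
  case (insert i I) then show ?case by (simp add: lift_phi_add)
qed

lemma lift_linear: "bil sA sT \<phi> \<Longrightarrow> Vector_Spaces.linear sT sT (lift \<phi>)"
  by (simp add: Vector_Spaces.linear_iff T.vector_space_axioms lift_add lift_scale)

lemma tensor_expand: "\<exists>S f. finite S \<and> t = (\<Sum>q\<in>S. sT (f q) (tensor (fst q) (snd q)))"
  using rep[of t] unfolding induced_map_def by blast

end


locale gr =
  fixes sA :: "'k::field \<Rightarrow> 'a::ab_group_add \<Rightarrow> 'a" and V :: "'g \<Rightarrow> 'a set"
  assumes G: "graded_space sA V"
begin

sublocale A: vector_space sA using G by (simp add: graded_space_def)

lemma Vsub: "A.subspace (V g)" using G by (simp add: graded_space_def)

definition dec :: "('g \<Rightarrow> 'a) \<Rightarrow> 'a \<Rightarrow> bool" where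
  "dec f x \<longleftrightarrow> finite {g. f g \<noteq> 0} \<and> (\<forall>g. f g \<in> V g) \<and> x = (\<Sum>g\<in>{g. f g \<noteq> 0}. f g)"

definition pi :: "'g \<Rightarrow> 'a \<Rightarrow> 'a" where
  "pi g x = (THE f. dec f x) g"

lemma dec_ex1: "\<exists>!f. dec f x" using G unfolding graded_space_def dec_def by blast

lemma dec_pi: "dec (\<lambda>g. pi g x) x"
proof -
  have "dec (THE f. dec f x) x" using dec_ex1 by (rule theI')
  moreover have "(\<lambda>g. pi g x) = (THE f. dec f x)" by (simp add: pi_def fun_eq_iff)
  ultimately show ?thesis by simp
qed

lemma pi_fin: "finite {g. pi g x \<noteq> 0}" and pi_V: "pi g x \<in> V g"
  and pi_sum: "x = (\<Sum>g\<in>{g. pi g x \<noteq> 0}. pi g x)"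
  using dec_pi[of x] unfolding dec_def by auto

lemma pi_unique: "dec f x \<Longrightarrow> pi g x = f g"
proof -
  assume "dec f x"
  then have "(\<lambda>g. pi g x) = f" using dec_ex1 dec_pi by blast
  then show ?thesis by (simp add: fun_eq_iff)
qed

lemma sum_super: "finite S \<Longrightarrow> {g. f g \<noteq> 0} \<subseteq> S \<Longrightarrow> (\<Sum>g\<in>S. f g) = (\<Sum>g\<in>{g. f g \<noteq> (0::'b::comm_monoid_add)}. f g)"
  by (rule sum.mono_neutral_right) auto

lemma pi_add: "pi g (x + y) = pi g x + pi g y"
proof (rule pi_unique)
  let ?S = "{g. pi g x \<noteq> 0} \<union> {g. pi g y \<noteq> 0}"
  have fin: "finite ?S" using pi_fin by auto
  show "dec (\<lambda>g. pi g x + pi g y) (x + y)" unfolding dec_def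
  proof (intro conjI allI)
    show "finite {g. pi g x + pi g y \<noteq> 0}" by (rule finite_subset[OF _ fin]) auto
    show "pi g x + pi g y \<in> V g" for g using A.subspace_add[OF Vsub pi_V pi_V] .
    have "(\<Sum>g\<in>{g. pi g x + pi g y \<noteq> 0}. pi g x + pi g y) = (\<Sum>g\<in>?S. pi g x + pi g y)"
      by (rule sum_super[symmetric]) (use fin in auto)
    also have "\<dots> = (\<Sum>g\<in>?S. pi g x) + (\<Sum>g\<in>?S. pi g y)" by (simp add: sum.distrib)
    also have "\<dots> = x + y" using pi_sum[of x] pi_sum[of y] by (subst (1 2) sum_super) (use fin in auto)
    finally show "x + y = (\<Sum>g\<in>{g. pi g x + pi g y \<noteq> 0}. pi g x + pi g y)" by simp
  qed
qed

lemma pi_scale: "pi g (sA c x) = sA c (pi g x)"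
proof (rule pi_unique)
  let ?S = "{g. pi g x \<noteq> 0}"
  have fin: "finite ?S" using pi_fin by auto
  show "dec (\<lambda>g. sA c (pi g x)) (sA c x)" unfolding dec_def
  proof (intro conjI allI)
    show "finite {g. sA c (pi g x) \<noteq> 0}" by (rule finite_subset[OF _ fin]) auto
    show "sA c (pi g x) \<in> V g" for g using A.subspace_scale[OF Vsub pi_V] .
    have "(\<Sum>g\<in>{g. sA c (pi g x) \<noteq> 0}. sA c (pi g x)) = (\<Sum>g\<in>?S. sA c (pi g x))"
      by (rule sum_super[symmetric]) (use fin in auto)
    also have "\<dots> = sA c x" using pi_sum[of x] by (simp add: A.scale_sum_right[symmetric])
    finally show "sA c x = (\<Sum>g\<in>{g. sA c (pi g x) \<noteq> 0}. sA c (pi g x))" by simp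
  qed
qed

lemma pi_zero: "pi g 0 = 0"
  using pi_add[of g 0 0] by simp

lemma pi_hom: "x \<in> V a \<Longrightarrow> pi g x = (if g = a then x else 0)"
proof (rule pi_unique)
  assume x: "x \<in> V a"
  show "dec (\<lambda>g. if g = a then x else 0) x" unfolding dec_def
  proof (intro conjI allI)
    show "finite {g. (if g = a then x else 0) \<noteq> 0}" by (rule finite_subset[of _ "{a}"]) auto
    show "(if g = a then x else 0) \<in> V g" for g using x A.subspace_0[OF Vsub] by auto
    show "x = (\<Sum>g\<in>{g. (if g = a then x else 0) \<noteq> 0}. if g = a then x else 0)"
      by (cases "x = 0") (auto simp: Collect_conv_if)
  qed
qed

lemma hom_supp: "x \<in> V a \<Longrightarrow> {g. pi g x \<noteq> 0} \<subseteq> {a}"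
  by (auto simp: pi_hom)

lemma gsum_super:
  assumes "finite S" "{g. pi g x \<noteq> 0} \<subseteq> S" "\<And>g. F g 0 = (0::'b::comm_monoid_add)"
  shows "(\<Sum>g\<in>S. F g (pi g x)) = (\<Sum>g\<in>{g. pi g x \<noteq> 0}. F g (pi g x))"
  by (rule sum.mono_neutral_right) (use assms in auto)

lemma gsum_hom:
  assumes "x \<in> V a" "\<And>g. F g 0 = (0::'b::comm_monoid_add)"
  shows "(\<Sum>g\<in>{g. pi g x \<noteq> 0}. F g (pi g x)) = F a x"
proof -
  have "(\<Sum>g\<in>{g. pi g x \<noteq> 0}. F g (pi g x)) = (\<Sum>g\<in>{a}. F g (pi g x))"
    by (rule gsum_super[symmetric]) (use assms hom_supp in auto)
  then show ?thesis using assms by (simp add: pi_hom)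
qed

lemma gsum_add:
  assumes "\<And>g u v. F g (u + v) = F g u + (F g v :: 'b::ab_group_add)"
  shows "(\<Sum>g\<in>{g. pi g (x + y) \<noteq> 0}. F g (pi g (x + y)))
     = (\<Sum>g\<in>{g. pi g x \<noteq> 0}. F g (pi g x)) + (\<Sum>g\<in>{g. pi g y \<noteq> 0}. F g (pi g y))"
proof -
  let ?S = "{g. pi g x \<noteq> 0} \<union> {g. pi g y \<noteq> 0}"
  have fin: "finite ?S" using pi_fin by auto
  have z: "F g 0 = 0" for g using assms[of g 0 0] by simp
  have "(\<Sum>g\<in>{g. pi g (x + y) \<noteq> 0}. F g (pi g (x + y))) = (\<Sum>g\<in>?S. F g (pi g (x + y)))"
    by (rule gsum_super[symmetric]) (use fin z in \<open>auto simp: pi_add\<close>)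
  also have "\<dots> = (\<Sum>g\<in>?S. F g (pi g x)) + (\<Sum>g\<in>?S. F g (pi g y))"
    by (simp add: pi_add assms sum.distrib)
  also have "\<dots> = (\<Sum>g\<in>{g. pi g x \<noteq> 0}. F g (pi g x)) + (\<Sum>g\<in>{g. pi g y \<noteq> 0}. F g (pi g y))"
    by (subst (1 2) gsum_super) (use fin z in auto)
  finally show ?thesis .
qed

lemma gsum_scale:
  assumes "vector_space sT" "\<And>g u. F g (sA c u) = sT c (F g u)" "\<And>g. F g 0 = 0"
  shows "(\<Sum>g\<in>{g. pi g (sA c x) \<noteq> 0}. F g (pi g (sA c x)))
     = sT c (\<Sum>g\<in>{g. pi g x \<noteq> 0}. F g (pi g x))"
proof -
  interpret T: vector_space sT by fact
  let ?S = "{g. pi g x \<noteq> 0}"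
  have fin: "finite ?S" using pi_fin by auto
  have "(\<Sum>g\<in>{g. pi g (sA c x) \<noteq> 0}. F g (pi g (sA c x))) = (\<Sum>g\<in>?S. F g (pi g (sA c x)))"
    by (rule gsum_super[symmetric]) (use fin assms in \<open>auto simp: pi_scale\<close>)
  also have "\<dots> = sT c (\<Sum>g\<in>?S. F g (pi g x))"
    by (simp add: pi_scale assms T.scale_sum_right)
  finally show ?thesis .
qed

lemma hom_zero: "x \<in> V a \<Longrightarrow> x \<in> V b \<Longrightarrow> a \<noteq> b \<Longrightarrow> x = 0"
  using pi_hom[of x a a] pi_hom[of x b a] by auto

end


locale main = gr sA V + tsq sA sT tensor
  for sA :: "'k::field \<Rightarrow> 'a::ab_group_add \<Rightarrow> 'a" and V :: "'g::ab_group_add \<Rightarrow> 'a set"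
    and sT :: "'k \<Rightarrow> 't::ab_group_add \<Rightarrow> 't" and tensor +
  fixes \<epsilon> :: "'g \<Rightarrow> 'g \<Rightarrow> 'k" and tb :: "'a \<Rightarrow> 'a \<Rightarrow> 'a \<Rightarrow> 'a"
  assumes TL: "ternary_leibniz_color_algebra sA V \<epsilon> tb"
begin

lemma skew: "skew_bicharacter \<epsilon>" using TL by (simp add: ternary_leibniz_color_algebra_def)

lemma eps_ne: "\<epsilon> a b \<noteq> 0" and eps_inv: "\<epsilon> a b * \<epsilon> b a = 1"
  and eps_add2: "\<epsilon> a (b + c) = \<epsilon> a b * \<epsilon> a c" and eps_add1: "\<epsilon> (a + b) c = \<epsilon> a c * \<epsilon> b c"
  using skew by (auto simp: skew_bicharacter_def)

lemma tb_deg: "x \<in> V a \<Longrightarrow> y \<in> V b \<Longrightarrow> z \<in> V c \<Longrightarrow> tb x y z \<in> V (a + b + c)"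
  using TL by (simp add: ternary_leibniz_color_algebra_def)

lemma tb_id: "x \<in> V a \<Longrightarrow> y \<in> V b \<Longrightarrow> z \<in> V c \<Longrightarrow> t \<in> V d \<Longrightarrow> u \<in> V e \<Longrightarrow>
   tb (tb x y z) t u = tb x y (tb z t u) + sA (\<epsilon> c (d + e)) (tb x (tb y t u) z)
                              + sA (\<epsilon> (b + c) (d + e)) (tb (tb x t u) y z)"
  using TL unfolding ternary_leibniz_color_algebra_def by blast

lemma tb_lin: "trilinear_map sA tb" using TL by (simp add: ternary_leibniz_color_algebra_def)

lemma tb_add1: "tb (x + x') y z = tb x y z + tb x' y z"
  and tb_add2: "tb x (y + y') z = tb x y z + tb x y' z"
  and tb_add3: "tb x y (z + z') = tb x y z + tb x y z'"
  and tb_scale1: "tb (sA c x) y z = sA c (tb x y z)"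
  and tb_scale2: "tb x (sA c y) z = sA c (tb x y z)"
  and tb_scale3: "tb x y (sA c z) = sA c (tb x y z)"
  using tb_lin unfolding trilinear_map_def Vector_Spaces.linear_iff by auto

lemma tb_zero1: "tb 0 y z = 0" and tb_zero2: "tb x 0 z = 0" and tb_zero3: "tb x y 0 = 0"
  using tb_add1[of 0 0 y z] tb_add2[of x 0 0 z] tb_add3[of x y 0 0] by auto

lemma tensor_zero1: "tensor 0 y = 0" and tensor_zero2: "tensor x 0 = 0"
  using tensor_add1[of 0 0 y] tensor_add2[of x 0 0] by auto

definition sgn :: "'g \<Rightarrow> 'a \<Rightarrow> 'a" where
  "sgn e y = (\<Sum>h\<in>{h. pi h y \<noteq> 0}. sA (\<epsilon> h e) (pi h y))"

lemma sgn_add: "sgn e (y + y') = sgn e y + sgn e y'"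
  unfolding sgn_def by (rule gsum_add) (simp add: A.scale_right_distrib)

lemma sgn_scale: "sgn e (sA c y) = sA c (sgn e y)"
  unfolding sgn_def by (rule gsum_scale) (simp_all add: A.vector_space_axioms A.scale_left_commute)

lemma sgn_hom: "y \<in> V b \<Longrightarrow> sgn e y = sA (\<epsilon> b e) y"
  unfolding sgn_def by (rule gsum_hom) simp_all

definition phi :: "'a \<Rightarrow> 'a \<Rightarrow> 'a \<Rightarrow> 'a \<Rightarrow> 't" where
  "phi x' y' x y = (\<Sum>a'\<in>{g. pi g x' \<noteq> 0}. \<Sum>b'\<in>{g. pi g y' \<noteq> 0}.
      tensor x (tb y (pi a' x') (pi b' y')) + tensor (tb x (pi a' x') (pi b' y')) (sgn (a' + b') y))"

lemma phi_bil: "bil sA sT (phi x' y')"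
  unfolding phi_def
proof (intro bil_sum bil_add T.vector_space_axioms)
  fix a' b'
  show "bil sA sT (\<lambda>x y. tensor x (tb y (pi a' x') (pi b' y')))"
    unfolding bil_def by (simp add: tensor_add1 tensor_add2 tensor_scale1 tensor_scale2 tb_add1 tb_scale1)
  show "bil sA sT (\<lambda>x y. tensor (tb x (pi a' x') (pi b' y')) (sgn (a' + b') y))"
    unfolding bil_def by (simp add: tensor_add1 tensor_add2 tensor_scale1 tensor_scale2 tb_add1 tb_scale1 sgn_add sgn_scale)
qed

lemma phi_add1: "phi (x1 + x2) y' x y = phi x1 y' x y + phi x2 y' x y"
  unfolding phi_def
  by (rule gsum_add) (simp add: tb_add2 tb_add1 tensor_add1 tensor_add2 sum.distrib algebra_simps)

lemma phi_scale1: "phi (sA c x') y' x y = sT c (phi x' y' x y)"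
  unfolding phi_def
  by (rule gsum_scale) (simp_all add: T.vector_space_axioms tb_scale2 tb_scale1 tensor_scale1 tensor_scale2
      T.scale_sum_right T.scale_right_distrib tb_zero2 tb_zero1 tensor_zero1 tensor_zero2)

lemma phi_swap: "phi x' y' x y = (\<Sum>b'\<in>{g. pi g y' \<noteq> 0}. \<Sum>a'\<in>{g. pi g x' \<noteq> 0}.
      tensor x (tb y (pi a' x') (pi b' y')) + tensor (tb x (pi a' x') (pi b' y')) (sgn (a' + b') y))"
  unfolding phi_def by (rule sum.swap)

lemma phi_add2: "phi x' (y1 + y2) x y = phi x' y1 x y + phi x' y2 x y"
  unfolding phi_swap
  by (rule gsum_add) (simp add: tb_add3 tb_add1 tensor_add1 tensor_add2 sum.distrib algebra_simps)

lemma phi_scale2: "phi x' (sA c y') x y = sT c (phi x' y' x y)"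
  unfolding phi_swap
  by (rule gsum_scale) (simp_all add: T.vector_space_axioms tb_scale3 tb_scale1 tensor_scale1 tensor_scale2
      T.scale_sum_right T.scale_right_distrib tb_zero3 tb_zero1 tensor_zero1 tensor_zero2)

lemma phi_hom:
  assumes "x' \<in> V a'" "y' \<in> V b'" "y \<in> V b"
  shows "phi x' y' x y = tensor x (tb y x' y') + sT (\<epsilon> b (a' + b')) (tensor (tb x x' y') y)"
proof -
  have "phi x' y' x y = (\<Sum>b''\<in>{g. pi g y' \<noteq> 0}.
      tensor x (tb y x' (pi b'' y')) + tensor (tb x x' (pi b'' y')) (sgn (a' + b'') y))"
    unfolding phi_def
    by (rule gsum_hom[OF assms(1)]) (simp add: tb_zero2 tb_zero1 tensor_zero1 tensor_zero2)
  also have "\<dots> = tensor x (tb y x' y') + tensor (tb x x' y') (sgn (a' + b') y)"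
    by (rule gsum_hom[OF assms(2)]) (simp add: tb_zero3 tb_zero1 tensor_zero1 tensor_zero2)
  finally show ?thesis using assms(3) by (simp add: sgn_hom tensor_scale2)
qed

definition Dop :: "'a \<Rightarrow> 'a \<Rightarrow> 't \<Rightarrow> 't" where "Dop x' y' t = lift (phi x' y') t"

definition br :: "'t \<Rightarrow> 't \<Rightarrow> 't" where "br t t' = lift (\<lambda>x' y'. Dop x' y' t) t'"

lemma Dop_bil: "bil sA sT (\<lambda>x' y'. Dop x' y' t)"
proof -
  have 1: "phi (x1 + x2) y' = (\<lambda>x y. phi x1 y' x y + phi x2 y' x y)" for x1 x2 y' by (simp add: fun_eq_iff phi_add1)
  have 2: "phi x' (y1 + y2) = (\<lambda>x y. phi x' y1 x y + phi x' y2 x y)" for x' y1 y2 by (simp add: fun_eq_iff phi_add2)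
  have 3: "phi (sA c x') y' = (\<lambda>x y. sT c (phi x' y' x y))" for c x' y' by (simp add: fun_eq_iff phi_scale1)
  have 4: "phi x' (sA c y') = (\<lambda>x y. sT c (phi x' y' x y))" for c x' y' by (simp add: fun_eq_iff phi_scale2)
  show ?thesis unfolding bil_def Dop_def by (simp add: 1 2 3 4 lift_phi_add lift_phi_scale)
qed

lemma br_add1: "br (t1 + t2) t' = br t1 t' + br t2 t'"
proof -
  have "(\<lambda>x' y'. Dop x' y' (t1 + t2)) = (\<lambda>x' y'. Dop x' y' t1 + Dop x' y' t2)"
    by (simp add: fun_eq_iff Dop_def lift_add phi_bil)
  then show ?thesis by (simp add: br_def lift_phi_add)
qed

lemma br_scale1: "br (sT c t) t' = sT c (br t t')"
proof -
  have "(\<lambda>x' y'. Dop x' y' (sT c t)) = (\<lambda>x' y'. sT c (Dop x' y' t))"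
    by (simp add: fun_eq_iff Dop_def lift_scale phi_bil)
  then show ?thesis by (simp add: br_def lift_phi_scale)
qed

lemma br_add2: "br t (t1 + t2) = br t t1 + br t t2"
  by (simp add: br_def lift_add Dop_bil)

lemma br_scale2: "br t (sT c t') = sT c (br t t')"
  by (simp add: br_def lift_scale Dop_bil)

lemma br_bilinear: "bilinear_map sT sT br"
  unfolding bilinear_map_def Vector_Spaces.linear_iff
  by (simp add: T.vector_space_axioms br_add1 br_add2 br_scale1 br_scale2)

lemma br_tensor: "br (tensor x y) (tensor x' y') = phi x' y' x y"
proof -
  have "br (tensor x y) (tensor x' y') = Dop x' y' (tensor x y)"
    unfolding br_def by (rule lift_tensor[OF Dop_bil])
  also have "\<dots> = phi x' y' x y" unfolding Dop_def by (rule lift_tensor[OF phi_bil])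
  finally show ?thesis .
qed

lemma br_hom: "x' \<in> V a' \<Longrightarrow> y' \<in> V b' \<Longrightarrow> y \<in> V b \<Longrightarrow>
   br (tensor x y) (tensor x' y') = tensor x (tb y x' y') + sT (\<epsilon> b (a' + b')) (tensor (tb x x' y') y)"
  by (simp add: br_tensor phi_hom)


end

context main begin

lemma lift_zero: "bil sA sT \<phi> \<Longrightarrow> lift \<phi> 0 = 0"
  using lift_add[of \<phi> 0 0] by simp

lemma if_add0: "(if P then a + b else 0) = (if P then a else 0) + (if P then b else (0::'t))"
  by simp

lemma if_scale0: "sT k (if P then a else 0) = (if P then sT k a else 0)"
  by simp

lemma lift_sum: "bil sA sT \<phi> \<Longrightarrow> lift \<phi> (\<Sum>i\<in>I. f i) = (\<Sum>i\<in>I. lift \<phi> (f i))"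
  by (induction I rule: infinite_finite_induct) (simp_all add: lift_zero lift_add)

lemma tensor_sum1: "tensor (\<Sum>i\<in>I. f i) y = (\<Sum>i\<in>I. tensor (f i) y)"
  by (induction I rule: infinite_finite_induct) (simp_all add: tensor_zero1 tensor_add1)

lemma tensor_sum2: "tensor x (\<Sum>i\<in>I. f i) = (\<Sum>i\<in>I. tensor x (f i))"
  by (induction I rule: infinite_finite_induct) (simp_all add: tensor_zero2 tensor_add2)

abbreviation Tg :: "'g \<Rightarrow> 't set" where "Tg \<equiv> tensor_grading sT tensor V"

lemma Tg_def: "Tg c = T.span {tensor x y | x y a b. x \<in> V a \<and> y \<in> V b \<and> a + b = c}"
  by (simp add: tensor_grading_def)

lemma Tg_sub: "T.subspace (Tg c)" by (simp add: Tg_def)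

lemma Tg_gen: "x \<in> V a \<Longrightarrow> y \<in> V b \<Longrightarrow> tensor x y \<in> Tg (a + b)"
  unfolding Tg_def by (rule T.span_base) blast

definition psi :: "'g \<Rightarrow> 'a \<Rightarrow> 'a \<Rightarrow> 't" where
  "psi c x y = (\<Sum>a\<in>{g. pi g x \<noteq> 0}. \<Sum>b\<in>{g. pi g y \<noteq> 0}. if a + b = c then tensor (pi a x) (pi b y) else 0)"

lemma psi_swap: "psi c x y = (\<Sum>b\<in>{g. pi g y \<noteq> 0}. \<Sum>a\<in>{g. pi g x \<noteq> 0}. if a + b = c then tensor (pi a x) (pi b y) else 0)"
  unfolding psi_def by (rule sum.swap)

lemma psi_bil: "bil sA sT (psi c)"
  unfolding bil_def
proof (intro conjI allI)
  fix x x' y show "psi c (x + x') y = psi c x y + psi c x' y"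
    unfolding psi_def by (rule gsum_add) (simp only: tensor_add1 if_add0 sum.distrib)
next
  fix x y y' show "psi c x (y + y') = psi c x y + psi c x y'"
    unfolding psi_swap by (rule gsum_add) (simp only: tensor_add2 if_add0 sum.distrib)
next
  fix k x y show "psi c (sA k x) y = sT k (psi c x y)"
    unfolding psi_def by (rule gsum_scale) (simp_all only: T.vector_space_axioms tensor_scale1 tensor_zero1 T.scale_sum_right if_scale0 if_cancel sum.neutral_const)
next
  fix k x y show "psi c x (sA k y) = sT k (psi c x y)"
    unfolding psi_swap by (rule gsum_scale) (simp_all only: T.vector_space_axioms tensor_scale2 tensor_zero2 T.scale_sum_right if_scale0 if_cancel sum.neutral_const)
qed

lemma psi_hom: "x \<in> V a \<Longrightarrow> y \<in> V b \<Longrightarrow> psi c x y = (if a + b = c then tensor x y else 0)"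
proof -
  assume x: "x \<in> V a" and y: "y \<in> V b"
  have "psi c x y = (\<Sum>b'\<in>{g. pi g y \<noteq> 0}. if a + b' = c then tensor x (pi b' y) else 0)"
    unfolding psi_def by (rule gsum_hom[OF x]) (simp only: tensor_zero1 if_cancel sum.neutral_const)
  also have "\<dots> = (if a + b = c then tensor x y else 0)"
    by (rule gsum_hom[OF y]) (simp add: tensor_zero2)
  finally show ?thesis .
qed

lemma psi_in: "psi c x y \<in> Tg c"
  unfolding psi_def
  by (intro T.subspace_sum[OF Tg_sub]) (auto intro: T.subspace_0[OF Tg_sub] Tg_gen[OF pi_V pi_V])

definition P :: "'g \<Rightarrow> 't \<Rightarrow> 't" where "P c t = lift (psi c) t"

lemma P_in: "P c t \<in> Tg c"
  unfolding P_def lift_def induced_map_def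
  by (intro T.subspace_sum[OF Tg_sub] T.subspace_scale[OF Tg_sub] psi_in)

lemma psi_total:
  assumes C: "finite C" "\<And>a b. pi a x \<noteq> 0 \<Longrightarrow> pi b y \<noteq> 0 \<Longrightarrow> a + b \<in> C"
  shows "(\<Sum>c\<in>C. psi c x y) = tensor x y"
proof -
  have "(\<Sum>c\<in>C. psi c x y) = (\<Sum>a\<in>{g. pi g x \<noteq> 0}. \<Sum>b\<in>{g. pi g y \<noteq> 0}. \<Sum>c\<in>C. if a + b = c then tensor (pi a x) (pi b y) else 0)"
    unfolding psi_def by (simp add: sum.swap[of _ C])
  also have "\<dots> = (\<Sum>a\<in>{g. pi g x \<noteq> 0}. \<Sum>b\<in>{g. pi g y \<noteq> 0}. tensor (pi a x) (pi b y))"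
  proof (intro sum.cong refl)
    fix a b assume "a \<in> {g. pi g x \<noteq> 0}" "b \<in> {g. pi g y \<noteq> 0}"
    then have ab: "a + b \<in> C" using C by auto
    show "(\<Sum>c\<in>C. if a + b = c then tensor (pi a x) (pi b y) else 0) = tensor (pi a x) (pi b y)"
      by (simp only: sum.delta'[OF C(1)] ab if_True)
  qed
  also have "\<dots> = tensor (\<Sum>a\<in>{g. pi g x \<noteq> 0}. pi a x) (\<Sum>b\<in>{g. pi g y \<noteq> 0}. pi b y)"
    by (simp only: tensor_sum1 tensor_sum2) (rule sum.swap)
  also have "\<dots> = tensor x y" by (simp only: pi_sum[symmetric])
  finally show ?thesis .
qed


lemma P_decomp: "\<exists>C. finite C \<and> {c. P c t \<noteq> 0} \<subseteq> C \<and> t = (\<Sum>c\<in>C. P c t)"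
proof -
  define f where "f = rep t"
  define Q where "Q = {q. f q \<noteq> 0}"
  have Q: "finite Q" using rep(1) by (simp add: Q_def f_def)
  define C where "C = (\<Union>q\<in>Q. (\<lambda>(a,b). a + b) ` ({g. pi g (fst q) \<noteq> 0} \<times> {g. pi g (snd q) \<noteq> 0}))"
  have Cfin: "finite C" unfolding C_def using Q pi_fin by auto
  have Pq: "P c t = (\<Sum>q\<in>Q. sT (f q) (psi c (fst q) (snd q)))" for c
    unfolding P_def lift_def induced_map_def Q_def f_def ..
  have "{c. P c t \<noteq> 0} \<subseteq> C"
  proof
    fix c assume "c \<in> {c. P c t \<noteq> 0}"
    then have "P c t \<noteq> 0" by simp
    have "\<exists>q. q \<in> Q \<and> psi c (fst q) (snd q) \<noteq> 0"
    proof (rule ccontr)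
      assume "\<not> ?thesis"
      then have "P c t = 0" unfolding Pq by (intro sum.neutral ballI) simp
      then show False using \<open>P c t \<noteq> 0\<close> by simp
    qed
    then obtain q where q: "q \<in> Q" "psi c (fst q) (snd q) \<noteq> 0" by blast
    have "\<exists>a b. pi a (fst q) \<noteq> 0 \<and> pi b (snd q) \<noteq> 0 \<and> a + b = c"
    proof (rule ccontr)
      assume nab: "\<not> ?thesis"
      then have "psi c (fst q) (snd q) = 0" unfolding psi_def
      proof (intro sum.neutral ballI)
        fix a b assume "a \<in> {g. pi g (fst q) \<noteq> 0}" "b \<in> {g. pi g (snd q) \<noteq> 0}"
        then have "(a + b = c) = False" using nab by blast
        then show "(if a + b = c then tensor (pi a (fst q)) (pi b (snd q)) else 0) = 0" by (simp only: if_False)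
      qed
      then show False using q by simp
    qed
    then obtain a b where ab: "pi a (fst q) \<noteq> 0" "pi b (snd q) \<noteq> 0" "a + b = c" by blast
    show "c \<in> C" unfolding C_def
      by (rule UN_I[OF q(1)], rule image_eqI[where x="(a,b)"]) (use ab in auto)
  qed
  moreover have "t = (\<Sum>c\<in>C. P c t)"
  proof -
    have "(\<Sum>c\<in>C. P c t) = (\<Sum>q\<in>Q. sT (f q) (\<Sum>c\<in>C. psi c (fst q) (snd q)))"
      unfolding Pq T.scale_sum_right by (rule sum.swap)
    also have "\<dots> = (\<Sum>q\<in>Q. sT (f q) (tensor (fst q) (snd q)))"
    proof (intro sum.cong refl arg_cong[where f="sT _"] psi_total Cfin)
      fix q a b assume qq: "q \<in> Q" and ab: "pi a (fst q) \<noteq> 0" "pi b (snd q) \<noteq> 0"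
      show "a + b \<in> C" unfolding C_def
        by (rule UN_I[OF qq], rule image_eqI[where x="(a,b)"]) (use ab in auto)
    qed
    also have "\<dots> = t" unfolding Q_def f_def using rep(2)[of t, unfolded induced_map_def] by (rule sym)
    finally show ?thesis by simp
  qed
  ultimately show ?thesis using Cfin by blast
qed

lemma P_on: "u \<in> Tg c' \<Longrightarrow> P c u = (if c = c' then u else 0)"
proof -
  assume u: "u \<in> Tg c'"
  show ?thesis
  proof (rule T.span_induct_alt[OF u[unfolded Tg_def], where h="\<lambda>u. P c u = (if c = c' then u else 0)"])
    show "P c 0 = (if c = c' then 0 else 0)" by (simp add: P_def lift_zero psi_bil)
  next
    fix k w y assume w: "w \<in> {tensor x y |x y a b. x \<in> V a \<and> y \<in> V b \<and> a + b = c'}"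
      and IH: "P c y = (if c = c' then y else 0)"
    from w obtain x y' a b where xy: "w = tensor x y'" "x \<in> V a" "y' \<in> V b" "a + b = c'" by blast
    have "P c w = psi c x y'" unfolding P_def xy(1) by (rule lift_tensor[OF psi_bil])
    also have "\<dots> = (if a + b = c then tensor x y' else 0)" by (rule psi_hom[OF xy(2,3)])
    finally have "P c w = (if c = c' then w else 0)" using xy(1,4) by (simp only: eq_commute[of c])
    then show "P c (sT k w + y) = (if c = c' then sT k w + y else 0)"
      using IH by (simp add: P_def lift_add lift_scale psi_bil)
  qed
qed

lemma Tg_graded: "graded_space sT Tg"
  unfolding graded_space_def
proof (intro conjI allI T.vector_space_axioms Tg_sub)
  fix t
  obtain C where C: "finite C" "{c. P c t \<noteq> 0} \<subseteq> C" "t = (\<Sum>c\<in>C. P c t)" using P_decomp by blast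
  have ex: "finite {c. P c t \<noteq> 0} \<and> (\<forall>c. P c t \<in> Tg c) \<and> t = (\<Sum>c\<in>{c. P c t \<noteq> 0}. P c t)"
    using C by (auto intro: finite_subset P_in simp: sum_super)
  have uq: "F = (\<lambda>c. P c t)" if F: "finite {c. F c \<noteq> 0} \<and> (\<forall>c. F c \<in> Tg c) \<and> t = (\<Sum>c\<in>{c. F c \<noteq> 0}. F c)" for F
  proof
    fix c
    have "P c t = (\<Sum>c'\<in>{c. F c \<noteq> 0}. P c (F c'))"
    proof -
      have "P c t = lift (psi c) (\<Sum>c'\<in>{c. F c \<noteq> 0}. F c')" using F by (simp add: P_def)
      also have "\<dots> = (\<Sum>c'\<in>{c. F c \<noteq> 0}. P c (F c'))"
        unfolding P_def by (rule lift_sum[OF psi_bil])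
      finally show ?thesis .
    qed
    also have "\<dots> = (\<Sum>c'\<in>{c. F c \<noteq> 0}. if c = c' then F c' else 0)"
      using F by (intro sum.cong refl P_on) auto
    also have "\<dots> = F c" using F by (simp add: sum.delta)
    finally show "F c = P c t" by simp
  qed
  show "\<exists>!F. finite {c. F c \<noteq> 0} \<and> (\<forall>c. F c \<in> Tg c) \<and> t = (\<Sum>c\<in>{c. F c \<noteq> 0}. F c)"
    by (rule ex1I[of _ "\<lambda>c. P c t"]) (use ex uq in auto)
qed

end

lemma (in vector_space) final_comb:
  assumes "p = u3 * r" "q = u3 * w5" "v6 = q * r" "v7 = q * r"
  shows "(T1 + u2 *s T2 + u3 *s T3) + p *s T4 + q *s (T5 + r *s (T6 + u2 *s T7 + u3 *s T8))
       = ((T1 + v6 *s T6) + u2 *s (T2 + v7 *s T7)) + u3 *s ((T3 + w5 *s T5) + r *s (T4 + q *s T8))"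
  using assms by (simp add: scale_right_distrib algebra_simps)

context main begin

lemma br_zero1: "br 0 t = 0" using br_add1[of 0 0 t] by simp
lemma br_zero2: "br t 0 = 0" using br_add2[of t 0 0] by simp

lemma Tg_induct:
  assumes u: "u \<in> Tg c" and h0: "h 0"
    and hS: "\<And>k x y a b w. x \<in> V a \<Longrightarrow> y \<in> V b \<Longrightarrow> a + b = c \<Longrightarrow> h w \<Longrightarrow> h (sT k (tensor x y) + w)"
  shows "h u"
  by (rule T.span_induct_alt[OF u[unfolded Tg_def], where h=h]) (use h0 hS in auto)

lemma br_gen_deg:
  assumes "x \<in> V a1" "y \<in> V b1" "x' \<in> V a2" "y' \<in> V b2"
  shows "br (tensor x y) (tensor x' y') \<in> Tg ((a1 + b1) + (a2 + b2))"
proof -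
  have 1: "tensor x (tb y x' y') \<in> Tg ((a1 + b1) + (a2 + b2))"
    using Tg_gen[OF assms(1) tb_deg[OF assms(2,3,4)]] by (simp add: ac_simps)
  have 2: "tensor (tb x x' y') y \<in> Tg ((a1 + b1) + (a2 + b2))"
    using Tg_gen[OF tb_deg[OF assms(1,3,4)] assms(2)] by (simp add: ac_simps)
  show ?thesis unfolding br_hom[OF assms(3,4,2)]
    by (rule T.subspace_add[OF Tg_sub 1 T.subspace_scale[OF Tg_sub 2]])
qed

lemma br_deg:
  assumes X: "X \<in> Tg a" and Y: "Y \<in> Tg b"
  shows "br X Y \<in> Tg (a + b)"
proof -
  have gen: "br (tensor x y) Y \<in> Tg (a + b)" if xy: "x \<in> V a1" "y \<in> V b1" "a1 + b1 = a" for x y a1 b1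
  proof (rule Tg_induct[OF Y, where h="\<lambda>Y. br (tensor x y) Y \<in> Tg (a + b)"])
    show "br (tensor x y) 0 \<in> Tg (a + b)" by (simp add: br_zero2 T.subspace_0[OF Tg_sub])
  next
    fix k x' y' a2 b2 w assume h: "x' \<in> V a2" "y' \<in> V b2" "a2 + b2 = b" "br (tensor x y) w \<in> Tg (a + b)"
    show "br (tensor x y) (sT k (tensor x' y') + w) \<in> Tg (a + b)"
      using br_gen_deg[OF xy(1,2) h(1,2)] xy(3) h
      by (simp add: br_add2 br_scale2 T.subspace_add[OF Tg_sub] T.subspace_scale[OF Tg_sub])
  qed
  show ?thesis
  proof (rule Tg_induct[OF X, where h="\<lambda>X. br X Y \<in> Tg (a + b)"])
    show "br 0 Y \<in> Tg (a + b)" by (simp add: br_zero1 T.subspace_0[OF Tg_sub])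
  next
    fix k x y a1 b1 w assume h: "x \<in> V a1" "y \<in> V b1" "a1 + b1 = a" "br w Y \<in> Tg (a + b)"
    show "br (sT k (tensor x y) + w) Y \<in> Tg (a + b)"
      using gen[OF h(1,2,3)] h(4)
      by (simp add: br_add1 br_scale1 T.subspace_add[OF Tg_sub] T.subspace_scale[OF Tg_sub])
  qed
qed

lemma leib_gen:
  assumes x: "x \<in> V a1" and y: "y \<in> V b1" and x': "x' \<in> V a2" and y': "y' \<in> V b2"
    and x'': "x'' \<in> V a3" and y'': "y'' \<in> V b3"
  shows "br (br (tensor x y) (tensor x' y')) (tensor x'' y'')
     = br (tensor x y) (br (tensor x' y') (tensor x'' y''))
       + sT (\<epsilon> (a2 + b2) (a3 + b3)) (br (br (tensor x y) (tensor x'' y'')) (tensor x' y'))"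
proof -
  define u2 where "u2 = \<epsilon> b2 (a3 + b3)"
  define u3 where "u3 = \<epsilon> (a2 + b2) (a3 + b3)"
  define p where "p = \<epsilon> (b1 + a2 + b2) (a3 + b3)"
  define q where "q = \<epsilon> b1 (a2 + b2)"
  define r where "r = \<epsilon> b1 (a3 + b3)"
  define w5 where "w5 = \<epsilon> (b1 + a3 + b3) (a2 + b2)"
  define v6 where "v6 = \<epsilon> b1 (a2 + (b2 + a3 + b3))"
  define v7 where "v7 = \<epsilon> b1 (a2 + a3 + b3 + b2)"
  define T1 where "T1 = tensor x (tb y x' (tb y' x'' y''))"
  define T2 where "T2 = tensor x (tb y (tb x' x'' y'') y')"
  define T3 where "T3 = tensor x (tb (tb y x'' y'') x' y')"
  define T4 where "T4 = tensor (tb x x'' y'') (tb y x' y')"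
  define T5 where "T5 = tensor (tb x x' y') (tb y x'' y'')"
  define T6 where "T6 = tensor (tb x x' (tb y' x'' y'')) y"
  define T7 where "T7 = tensor (tb x (tb x' x'' y'') y') y"
  define T8 where "T8 = tensor (tb (tb x x'' y'') x' y') y"
  have d1: "tb y x' y' \<in> V (b1 + a2 + b2)" by (rule tb_deg[OF y x' y'])
  have d2: "tb y' x'' y'' \<in> V (b2 + a3 + b3)" by (rule tb_deg[OF y' x'' y''])
  have d3: "tb x' x'' y'' \<in> V (a2 + a3 + b3)" by (rule tb_deg[OF x' x'' y''])
  have d4: "tb y x'' y'' \<in> V (b1 + a3 + b3)" by (rule tb_deg[OF y x'' y''])
  have TI1: "tb (tb y x' y') x'' y'' = tb y x' (tb y' x'' y'') + sA u2 (tb y (tb x' x'' y'') y') + sA u3 (tb (tb y x'' y'') x' y')"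
    unfolding u2_def u3_def by (rule tb_id[OF y x' y' x'' y''])
  have TI2: "tb (tb x x' y') x'' y'' = tb x x' (tb y' x'' y'') + sA u2 (tb x (tb x' x'' y'') y') + sA u3 (tb (tb x x'' y'') x' y')"
    unfolding u2_def u3_def by (rule tb_id[OF x x' y' x'' y''])
  have E1: "br (tensor x y) (tensor x' y') = tensor x (tb y x' y') + sT q (tensor (tb x x' y') y)"
    unfolding q_def by (rule br_hom[OF x' y' y])
  have E2: "br (tensor x (tb y x' y')) (tensor x'' y'') = (T1 + sT u2 T2 + sT u3 T3) + sT p T4"
    unfolding br_hom[OF x'' y'' d1] TI1 T1_def T2_def T3_def T4_def p_def
    by (simp only: tensor_add2 tensor_scale2)
  have E3: "br (tensor (tb x x' y') y) (tensor x'' y'') = T5 + sT r (T6 + sT u2 T7 + sT u3 T8)"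
    unfolding br_hom[OF x'' y'' y] TI2 T5_def T6_def T7_def T8_def r_def
    by (simp only: tensor_add1 tensor_scale1)
  have LHS: "br (br (tensor x y) (tensor x' y')) (tensor x'' y'')
      = (T1 + sT u2 T2 + sT u3 T3) + sT p T4 + sT q (T5 + sT r (T6 + sT u2 T7 + sT u3 T8))"
    unfolding E1 br_add1 br_scale1 E2 E3 ..
  have F1: "br (tensor x' y') (tensor x'' y'') = tensor x' (tb y' x'' y'') + sT u2 (tensor (tb x' x'' y'') y')"
    unfolding u2_def by (rule br_hom[OF x'' y'' y'])
  have F2: "br (tensor x y) (tensor x' (tb y' x'' y'')) = T1 + sT v6 T6"
    unfolding br_hom[OF x' d2 y] T1_def T6_def v6_def ..
  have F3: "br (tensor x y) (tensor (tb x' x'' y'') y') = T2 + sT v7 T7"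
    unfolding br_hom[OF d3 y' y] T2_def T7_def v7_def ..
  have F4: "br (tensor x y) (tensor x'' y'') = tensor x (tb y x'' y'') + sT r (tensor (tb x x'' y'') y)"
    unfolding r_def by (rule br_hom[OF x'' y'' y])
  have F5: "br (tensor x (tb y x'' y'')) (tensor x' y') = T3 + sT w5 T5"
    unfolding br_hom[OF x' y' d4] T3_def T5_def w5_def ..
  have F6: "br (tensor (tb x x'' y'') y) (tensor x' y') = T4 + sT q T8"
    unfolding br_hom[OF x' y' y] T4_def T8_def q_def ..
  have RHS: "br (tensor x y) (br (tensor x' y') (tensor x'' y''))
       + sT (\<epsilon> (a2 + b2) (a3 + b3)) (br (br (tensor x y) (tensor x'' y'')) (tensor x' y'))
     = ((T1 + sT v6 T6) + sT u2 (T2 + sT v7 T7)) + sT u3 ((T3 + sT w5 T5) + sT r (T4 + sT q T8))"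
    unfolding F1 br_add2 br_scale2 F2 F3 F4 br_add1 br_scale1 F5 F6 u3_def ..
  have s1: "p = u3 * r"
  proof -
    have "b1 + a2 + b2 = b1 + (a2 + b2)" by (simp add: add.assoc)
    then show ?thesis unfolding p_def u3_def r_def by (simp add: eps_add1 mult.commute)
  qed
  have s2: "q = u3 * w5"
  proof -
    have "b1 + a3 + b3 = b1 + (a3 + b3)" by (simp add: add.assoc)
    then have "w5 = q * \<epsilon> (a3 + b3) (a2 + b2)" unfolding w5_def q_def by (simp add: eps_add1)
    then show ?thesis unfolding u3_def using eps_inv[of "a2 + b2" "a3 + b3"]
      by (simp add: mult.assoc mult.left_commute)
  qed
  have s3: "v6 = q * r"
  proof -
    have "a2 + (b2 + a3 + b3) = (a2 + b2) + (a3 + b3)" by (simp add: ac_simps)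
    then show ?thesis unfolding v6_def q_def r_def by (simp add: eps_add2)
  qed
  have s4: "v7 = q * r"
  proof -
    have "a2 + a3 + b3 + b2 = (a2 + b2) + (a3 + b3)" by (simp add: ac_simps)
    then show ?thesis unfolding v7_def q_def r_def by (simp add: eps_add2)
  qed
  show ?thesis unfolding LHS RHS by (rule T.final_comb[OF s1 s2 s3 s4])
qed

lemma lin_step:
  assumes "A1 = B1 + sT e C1" "A2 = B2 + sT e C2"
  shows "sT k A1 + A2 = (sT k B1 + B2) + sT e (sT k C1 + C2)"
  using assms by (simp add: T.scale_right_distrib T.scale_left_commute[of e k] ac_simps)

lemma leib:
  assumes X: "X \<in> Tg a" and Y: "Y \<in> Tg b" and Z: "Z \<in> Tg c"
  shows "br (br X Y) Z = br X (br Y Z) + sT (\<epsilon> b c) (br (br X Z) Y)"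
proof -
  have s1: "br (br (tensor x y) (tensor x' y')) Z = br (tensor x y) (br (tensor x' y') Z) + sT (\<epsilon> b c) (br (br (tensor x y) Z) (tensor x' y'))"
    if h: "x \<in> V a1" "y \<in> V b1" "x' \<in> V a2" "y' \<in> V b2" "a2 + b2 = b" for x y x' y' a1 b1 a2 b2
  proof (rule Tg_induct[OF Z])
    show "br (br (tensor x y) (tensor x' y')) 0 = br (tensor x y) (br (tensor x' y') 0) + sT (\<epsilon> b c) (br (br (tensor x y) 0) (tensor x' y'))"
      by (simp add: br_zero1 br_zero2)
  next
    fix k x'' y'' a3 b3 w assume hh: "x'' \<in> V a3" "y'' \<in> V b3" "a3 + b3 = c"
      "br (br (tensor x y) (tensor x' y')) w = br (tensor x y) (br (tensor x' y') w) + sT (\<epsilon> b c) (br (br (tensor x y) w) (tensor x' y'))"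
    have g: "br (br (tensor x y) (tensor x' y')) (tensor x'' y'') = br (tensor x y) (br (tensor x' y') (tensor x'' y'')) + sT (\<epsilon> b c) (br (br (tensor x y) (tensor x'' y'')) (tensor x' y'))"
      using leib_gen[OF h(1-4) hh(1,2)] h(5) hh(3) by simp
    show "br (br (tensor x y) (tensor x' y')) (sT k (tensor x'' y'') + w) = br (tensor x y) (br (tensor x' y') (sT k (tensor x'' y'') + w)) + sT (\<epsilon> b c) (br (br (tensor x y) (sT k (tensor x'' y'') + w)) (tensor x' y'))"
      unfolding br_add1 br_add2 br_scale1 br_scale2 by (rule lin_step[OF g hh(4)])
  qed
  have s2: "br (br (tensor x y) Y) Z = br (tensor x y) (br Y Z) + sT (\<epsilon> b c) (br (br (tensor x y) Z) Y)"
    if h: "x \<in> V a1" "y \<in> V b1" for x y a1 b1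
  proof (rule Tg_induct[OF Y])
    show "br (br (tensor x y) 0) Z = br (tensor x y) (br 0 Z) + sT (\<epsilon> b c) (br (br (tensor x y) Z) 0)"
      by (simp add: br_zero1 br_zero2)
  next
    fix k x' y' a2 b2 w assume hh: "x' \<in> V a2" "y' \<in> V b2" "a2 + b2 = b"
      "br (br (tensor x y) w) Z = br (tensor x y) (br w Z) + sT (\<epsilon> b c) (br (br (tensor x y) Z) w)"
    show "br (br (tensor x y) (sT k (tensor x' y') + w)) Z = br (tensor x y) (br (sT k (tensor x' y') + w) Z) + sT (\<epsilon> b c) (br (br (tensor x y) Z) (sT k (tensor x' y') + w))"
      unfolding br_add1 br_add2 br_scale1 br_scale2 by (rule lin_step[OF s1[OF h hh(1-3)] hh(4)])
  qed
  show ?thesis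
  proof (rule Tg_induct[OF X])
    show "br (br 0 Y) Z = br 0 (br Y Z) + sT (\<epsilon> b c) (br (br 0 Z) Y)"
      by (simp add: br_zero1 br_zero2)
  next
    fix k x y a1 b1 w assume hh: "x \<in> V a1" "y \<in> V b1" "a1 + b1 = a"
      "br (br w Y) Z = br w (br Y Z) + sT (\<epsilon> b c) (br (br w Z) Y)"
    show "br (br (sT k (tensor x y) + w) Y) Z = br (sT k (tensor x y) + w) (br Y Z) + sT (\<epsilon> b c) (br (br (sT k (tensor x y) + w) Z) Y)"
      unfolding br_add1 br_add2 br_scale1 br_scale2 by (rule lin_step[OF s2[OF hh(1,2)] hh(4)])
  qed
qed

lemma br_leibniz: "leibniz_color_algebra sT Tg \<epsilon> br"
  unfolding leibniz_color_algebra_def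
  using Tg_graded skew br_bilinear br_deg leib by blast

end

theorem mainTheorem11:
  fixes sA :: "'k::field \<Rightarrow> 'a::ab_group_add \<Rightarrow> 'a"
    and V :: "'g::ab_group_add \<Rightarrow> 'a set"
    and \<epsilon> :: "'g \<Rightarrow> 'g \<Rightarrow> 'k"
    and tb :: "'a \<Rightarrow> 'a \<Rightarrow> 'a \<Rightarrow> 'a"
    and sT :: "'k \<Rightarrow> 't::ab_group_add \<Rightarrow> 't"
    and tensor :: "'a \<Rightarrow> 'a \<Rightarrow> 't"
  assumes char: "(2::'k) \<noteq> 0"
    and A: "ternary_leibniz_color_algebra sA V \<epsilon> tb"
    and T: "is_tensor_square sA sT tensor"
  shows "\<exists>br. bilinear_map sT sT br
      \<and> (\<forall>a b a' b' x y x' y'. x \<in> V a \<longrightarrow> y \<in> V b \<longrightarrow> x' \<in> V a' \<longrightarrow> y' \<in> V b' \<longrightarrow>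
           br (tensor x y) (tensor x' y')
             = tensor x (tb y x' y') + sT (\<epsilon> b (a' + b')) (tensor (tb x x' y') y))
      \<and> leibniz_color_algebra sT (tensor_grading sT tensor V) \<epsilon> br"
proof -
  interpret M: main sA V sT tensor \<epsilon> tb
  proof (unfold_locales)
    show "graded_space sA V" using A by (simp add: ternary_leibniz_color_algebra_def)
  qed (fact T A)+
  show ?thesis
    by (rule exI[of _ M.br]) (use M.br_bilinear M.br_hom M.br_leibniz in blast)
qed

end
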